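(* Let $(X_k)_{k\ge1}$ be a random walk on a finite vertex set $V$ (possibly non-Markovian and non-stationary) with $X_1\sim\pi$, and assume $C(\pi,V)<\infty$. Then $S\mapsto C(\pi,S)$ (with $C(\pi,\emptyset)=0$) is nondecreasing and submodular on $2^V$: $C(\pi,S)\le C(\pi,T)$ for $S\subseteq T$, and $C(\pi,S\cup\{v\})-C(\pi,S)\ge C(\pi,T\cup\{v\})-C(\pi,T)$ for all $S\subseteq T\subseteq V$ and $v\in V\setminus T$.
   Context: A random walk on $V$ is a discrete-time random process $X_1,X_2,\dots$ with values in $V$ whose law is given by arbitrary conditional distributions $\Pr(X_k=\cdot\mid X_1,\dots,X_{k-1})$. For nonempty $S\subseteq V$, $\phi(S)=\min\{k:\ \forall s\in S\ \exists j\le k \text{ with } X_j=s\}$, and the cover time is $C(\pi,S)=\mathbf{E}[\phi(S)]$ when $X_1\sim\pi$. *)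

theory Defs
  imports "HOL-Probability.Probability"
begin

text \<open>A random walk on V is an arbitrary discrete-time process X 1, X 2, ... with values
  in V (index 0 is unused).\<close>

definition cover_index :: "(nat \<Rightarrow> 'w \<Rightarrow> 'v) \<Rightarrow> 'v set \<Rightarrow> 'w \<Rightarrow> ennreal" where
  "cover_index X S \<omega> =
     (if \<exists>k\<ge>1. \<forall>s\<in>S. \<exists>j\<in>{1..k}. X j \<omega> = s
      then of_nat (LEAST k. k \<ge> 1 \<and> (\<forall>s\<in>S. \<exists>j\<in>{1..k}. X j \<omega> = s))
      else \<infinity>)"

definition cover_time :: "'w measure \<Rightarrow> (nat \<Rightarrow> 'w \<Rightarrow> 'v) \<Rightarrow> 'v set \<Rightarrow> ennreal" where
  "cover_time M X S = (if S = {} then 0 else \<integral>\<^sup>+ \<omega>. cover_index X S \<omega> \<partial>M)"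

end

theory Submission
  imports Defs
begin

lemma predP:
  fixes X :: "nat \<Rightarrow> 'w \<Rightarrow> 'v"
  assumes "\<And>k. k \<ge> 1 \<Longrightarrow> X k \<in> measurable M (count_space V)" and "finite S"
  shows "{\<omega>\<in>space M. \<forall>s\<in>S. \<exists>j\<in>{1..k}. X j \<omega> = s} \<in> sets M"
proof -
  have x: "X j -` {s} \<inter> space M \<in> sets M" if "j \<in> {1..k}" for j s
  proof -
    have "X j -` ({s}\<inter>V) \<inter> space M \<in> sets M"
      using measurable_sets[OF assms(1)[of j], of "{s}\<inter>V"] that by (simp add: Int_assoc)
    moreover have "X j -` ({s}\<inter>V) \<inter> space M = X j -` {s} \<inter> space M"
      using measurable_space[OF assms(1)] that by auto
    ultimately show ?thesis by simp
  qed
  have y: "{\<omega>\<in>space M. \<exists>j\<in>{1..k}. X j \<omega> = s} \<in> sets M" for s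
  proof -
    have "{\<omega>\<in>space M. \<exists>j\<in>{1..k}. X j \<omega> = s} = (\<Union>j\<in>{1..k}. X j -` {s} \<inter> space M)"
      by auto
    moreover have "(\<Union>j\<in>{1..k}. X j -` {s} \<inter> space M) \<in> sets M"
      by (rule sets.finite_UN) (auto intro: x)
    ultimately show ?thesis by (simp only:)
  qed
  show ?thesis
  proof (cases "S = {}")
    case True then show ?thesis by simp
  next
    case False then show ?thesis
      using sets.sets_Collect_finite_All'[OF y assms(2)] by simp
  qed
qed

definition PP :: "(nat \<Rightarrow> 'w \<Rightarrow> 'v) \<Rightarrow> 'v set \<Rightarrow> nat \<Rightarrow> 'w \<Rightarrow> bool" where "PP X S k \<omega> \<longleftrightarrow> k \<ge> 1 \<and> (\<forall>s\<in>S. \<exists>j\<in>{1..k}. X j \<omega> = s)"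

lemma ci_le: "PP X S k \<omega> \<Longrightarrow> cover_index X S \<omega> \<le> of_nat k"
proof -
  assume h: "PP X S k \<omega>"
  then have "\<exists>k\<ge>1. \<forall>s\<in>S. \<exists>j\<in>{1..k}. X j \<omega> = s" unfolding PP_def by blast
  moreover have "(LEAST k. k \<ge> 1 \<and> (\<forall>s\<in>S. \<exists>j\<in>{1..k}. X j \<omega> = s)) \<le> k"
    using h unfolding PP_def by (intro Least_le) simp
  ultimately show ?thesis unfolding cover_index_def by simp
qed

lemma ci_attain: "cover_index X S \<omega> < \<infinity> \<Longrightarrow> \<exists>k. PP X S k \<omega> \<and> cover_index X S \<omega> = of_nat k"
proof -
  assume h: "cover_index X S \<omega> < \<infinity>"
  have e: "\<exists>k\<ge>1. \<forall>s\<in>S. \<exists>j\<in>{1..k}. X j \<omega> = s"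
  proof (rule ccontr)
    assume "\<not> (\<exists>k\<ge>1. \<forall>s\<in>S. \<exists>j\<in>{1..k}. X j \<omega> = s)"
    then have "cover_index X S \<omega> = \<infinity>" unfolding cover_index_def by (simp only: if_False)
    with h show False by simp
  qed
  have p: "PP X S (LEAST k. k \<ge> 1 \<and> (\<forall>s\<in>S. \<exists>j\<in>{1..k}. X j \<omega> = s)) \<omega>"
    unfolding PP_def by (rule LeastI_ex[OF e])
  have "cover_index X S \<omega> = of_nat (LEAST k. k \<ge> 1 \<and> (\<forall>s\<in>S. \<exists>j\<in>{1..k}. X j \<omega> = s))"
    unfolding cover_index_def using e by (simp only: if_True)
  with p show ?thesis by blast
qed

lemma ci_ge: "(\<And>k. PP X S k \<omega> \<Longrightarrow> c \<le> of_nat k) \<Longrightarrow> c \<le> cover_index X S \<omega>"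
proof -
  assume h: "\<And>k. PP X S k \<omega> \<Longrightarrow> c \<le> of_nat k"
  show ?thesis
  proof (cases "cover_index X S \<omega> < \<infinity>")
    case True
    from ci_attain[OF True] obtain k where k: "PP X S k \<omega>" "cover_index X S \<omega> = of_nat k"
      by (elim exE conjE)
    have "c \<le> of_nat k" by (rule h[OF k(1)])
    then show ?thesis unfolding k(2) .
  next
    case False then have "cover_index X S \<omega> = \<infinity>" by (simp add: not_less top_unique)
    then show ?thesis by simp
  qed
qed

lemma PP_mono_k: assumes "PP X S k \<omega>" "k \<le> k'" shows "PP X S k' \<omega>"
  unfolding PP_def
proof (intro conjI ballI)
  show "1 \<le> k'" using assms unfolding PP_def by simp
  fix s assume "s \<in> S"
  then obtain j where "j \<in> {1..k}" "X j \<omega> = s" using assms(1) unfolding PP_def by blast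
  then show "\<exists>j\<in>{1..k'}. X j \<omega> = s" using assms(2) by (intro bexI[of _ j]) auto
qed

lemma PP_mono_S: "PP X T k \<omega> \<Longrightarrow> S \<subseteq> T \<Longrightarrow> PP X S k \<omega>"
  unfolding PP_def by blast

lemma PP_Un: "PP X S k \<omega> \<Longrightarrow> PP X T k \<omega> \<Longrightarrow> PP X (S \<union> T) k \<omega>"
  unfolding PP_def by blast

lemma ci_mono: "S \<subseteq> T \<Longrightarrow> cover_index X S \<omega> \<le> cover_index X T \<omega>"
  by (rule ci_ge) (meson PP_mono_S ci_le)

lemma ci_max: "cover_index X (S \<union> {v}) \<omega> = max (cover_index X S \<omega>) (cover_index X {v} \<omega>)"
proof (rule antisym)
  show "max (cover_index X S \<omega>) (cover_index X {v} \<omega>) \<le> cover_index X (S \<union> {v}) \<omega>"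
    by (intro max.boundedI ci_mono) auto
  show "cover_index X (S \<union> {v}) \<omega> \<le> max (cover_index X S \<omega>) (cover_index X {v} \<omega>)"
  proof (cases "cover_index X S \<omega> < \<infinity> \<and> cover_index X {v} \<omega> < \<infinity>")
    case True
    from ci_attain[of X S \<omega>] True obtain a where a: "PP X S a \<omega>" "cover_index X S \<omega> = of_nat a"
      by blast
    from ci_attain[of X "{v}" \<omega>] True obtain b where b: "PP X {v} b \<omega>" "cover_index X {v} \<omega> = of_nat b"
      by blast
    have "PP X (S \<union> {v}) (max a b) \<omega>"
      by (rule PP_Un; rule PP_mono_k) (use a b in auto)
    then have "cover_index X (S \<union> {v}) \<omega> \<le> of_nat (max a b)" by (rule ci_le)
    moreover have "of_nat (max a b) = max (of_nat a) (of_nat b :: ennreal)"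
      by (cases "a \<le> b") (auto simp: max_absorb1 max_absorb2)
    ultimately show ?thesis unfolding a(2) b(2) by simp
  next
    case False
    then have "max (cover_index X S \<omega>) (cover_index X {v} \<omega>) = \<top>"
      by (auto simp: max_def not_less top_unique)
    then show ?thesis by simp
  qed
qed

lemma ci_INF: "cover_index X S \<omega> = (INF k. if PP X S k \<omega> then of_nat k else \<infinity>)"
proof (rule antisym)
  show "cover_index X S \<omega> \<le> (INF k. if PP X S k \<omega> then of_nat k else \<infinity>)"
  proof (rule INF_greatest)
    fix k :: nat
    show "cover_index X S \<omega> \<le> (if PP X S k \<omega> then of_nat k else \<infinity>)"
    proof (cases "PP X S k \<omega>")
      case True then show ?thesis using ci_le[OF True] by (simp only: if_True)
    qed simp
  qed
  show "(INF k. if PP X S k \<omega> then of_nat k else \<infinity>) \<le> cover_index X S \<omega>"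
  proof (cases "cover_index X S \<omega> < \<infinity>")
    case True
    from ci_attain[OF True] obtain k where k: "PP X S k \<omega>" "cover_index X S \<omega> = of_nat k"
      by (elim exE conjE)
    have "(INF k. if PP X S k \<omega> then of_nat k else \<infinity>) \<le> (if PP X S k \<omega> then of_nat k else (\<infinity>::ennreal))"
      by (rule INF_lower) simp
    also have "\<dots> = of_nat k" using k(1) by (simp only: if_True)
    finally show ?thesis unfolding k(2) .
  next
    case False then have "cover_index X S \<omega> = \<infinity>" by (simp add: not_less top_unique)
    then show ?thesis by simp
  qed
qed

lemma ci_meas:
  fixes X :: "nat \<Rightarrow> 'w \<Rightarrow> 'v"
  assumes "\<And>k. k \<ge> 1 \<Longrightarrow> X k \<in> measurable M (count_space V)" and "finite S"
  shows "cover_index X S \<in> borel_measurable M"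
proof -
  have "(\<lambda>\<omega>. if PP X S k \<omega> then of_nat k else (\<infinity>::ennreal)) \<in> borel_measurable M" for k
  proof (rule measurable_If)
    have "{\<omega>\<in>space M. PP X S k \<omega>} \<in> sets M"
    proof (cases "k \<ge> 1")
      case True then show ?thesis using predP[OF assms, where k=k] unfolding PP_def by simp
    next
      case False then show ?thesis unfolding PP_def by simp
    qed
    then show "{\<omega>\<in>space M. PP X S k \<omega>} \<in> sets M" by simp
  qed auto
  then have "(\<lambda>\<omega>. INF k. if PP X S k \<omega> then of_nat k else (\<infinity>::ennreal)) \<in> borel_measurable M"
    by (intro borel_measurable_INF) auto
  then show ?thesis by (subst ci_INF[abs_def]) simp
qed

definition hh :: "(nat \<Rightarrow> 'w \<Rightarrow> 'v) \<Rightarrow> 'v set \<Rightarrow> 'w \<Rightarrow> ennreal" where "hh X S \<omega> = (if S = {} then 0 else cover_index X S \<omega>)"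

lemma ct_hh: "cover_time M X S = (\<integral>\<^sup>+ \<omega>. hh X S \<omega> \<partial>M)"
  unfolding cover_time_def hh_def by simp

lemma hh_mono: "S \<subseteq> T \<Longrightarrow> hh X S \<omega> \<le> hh X T \<omega>"
  unfolding hh_def by (auto simp: ci_mono)

lemma hh_max: "hh X (S \<union> {v}) \<omega> = max (hh X S \<omega>) (cover_index X {v} \<omega>)"
  unfolding hh_def using ci_max[of X S v \<omega>] by auto

lemma hh_meas:
  fixes X :: "nat \<Rightarrow> 'w \<Rightarrow> 'v"
  assumes "\<And>k. k \<ge> 1 \<Longrightarrow> X k \<in> measurable M (count_space V)" and "finite S"
  shows "hh X S \<in> borel_measurable M"
  unfolding hh_def using ci_meas[OF assms] by (cases "S = {}") auto

lemma maxineq: "max t u + s \<le> max s u + t" if st: "(s::ennreal) \<le> t"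
proof (cases "u \<le> s")
  case True
  then have "u \<le> t" using st by simp
  then show ?thesis using True by (simp add: max_absorb1 add.commute)
next
  case False
  then have su: "s \<le> u" by simp
  have m2: "max s u = u" using su by (rule max_absorb2)
  show ?thesis
  proof (cases "u \<le> t")
    case True
    have "max t u + s = t + s" using True by (simp add: max_absorb1)
    also have "\<dots> \<le> t + u" by (rule add_left_mono[OF su])
    also have "\<dots> = max s u + t" using m2 by (simp add: add.commute)
    finally show ?thesis .
  next
    case False
    have "max t u + s = u + s" using False by (simp add: max_absorb2)
    also have "\<dots> \<le> u + t" by (rule add_left_mono[OF st])
    also have "\<dots> = max s u + t" using m2 by simp
    finally show ?thesis .
  qed
qed


lemma enn2real_add': "a < top \<Longrightarrow> b < top \<Longrightarrow> enn2real (a + b) = enn2real a + enn2real b"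
  by (cases a; cases b) (auto simp: ennreal_plus[symmetric] simp del: ennreal_plus)

theorem proposition7:
  fixes M :: "'w measure" and X :: "nat \<Rightarrow> 'w \<Rightarrow> 'v" and V :: "'v set"
    and \<pi> :: "'v measure"
  assumes "prob_space M"
    and "finite V"
    and "\<And>k. k \<ge> 1 \<Longrightarrow> X k \<in> measurable M (count_space V)"
    and "distr M (count_space V) (X 1) = \<pi>"
    and "cover_time M X V < \<infinity>"
  shows "(\<forall>S T. S \<subseteq> T \<and> T \<subseteq> V \<longrightarrow> cover_time M X S \<le> cover_time M X T)
     \<and> (\<forall>S T v. S \<subseteq> T \<and> T \<subseteq> V \<and> v \<in> V - T \<longrightarrow>
          enn2real (cover_time M X (S \<union> {v})) - enn2real (cover_time M X S)
            \<ge> enn2real (cover_time M X (T \<union> {v})) - enn2real (cover_time M X T))"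
proof -
  have mono: "cover_time M X S \<le> cover_time M X T" if "S \<subseteq> T" for S T
    unfolding ct_hh by (rule nn_integral_mono) (rule hh_mono[OF that])
  have meas: "hh X S \<in> borel_measurable M" if "S \<subseteq> V" for S
    by (rule hh_meas[where V=V]) (use assms(3) finite_subset[OF that assms(2)] in auto)
  have fin: "cover_time M X S < \<infinity>" if "S \<subseteq> V" for S
    using mono[OF that] assms(5) by (rule le_less_trans)
  have sub: "enn2real (cover_time M X (S \<union> {v})) - enn2real (cover_time M X S)
            \<ge> enn2real (cover_time M X (T \<union> {v})) - enn2real (cover_time M X T)"
    if h: "S \<subseteq> T" "T \<subseteq> V" "v \<in> V - T" for S T v
  proof -
    have SV: "S \<subseteq> V" "S \<union> {v} \<subseteq> V" "T \<union> {v} \<subseteq> V" using h by auto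
    have pw: "hh X (T \<union> {v}) \<omega> + hh X S \<omega> \<le> hh X (S \<union> {v}) \<omega> + hh X T \<omega>" for \<omega>
      unfolding hh_max by (rule maxineq) (rule hh_mono[OF h(1)])
    have "cover_time M X (T \<union> {v}) + cover_time M X S
        = (\<integral>\<^sup>+ \<omega>. hh X (T \<union> {v}) \<omega> + hh X S \<omega> \<partial>M)"
      unfolding ct_hh by (rule nn_integral_add[symmetric]) (use meas SV in auto)
    also have "\<dots> \<le> (\<integral>\<^sup>+ \<omega>. hh X (S \<union> {v}) \<omega> + hh X T \<omega> \<partial>M)"
      by (rule nn_integral_mono) (rule pw)
    also have "\<dots> = cover_time M X (S \<union> {v}) + cover_time M X T"
      unfolding ct_hh by (rule nn_integral_add) (use meas SV h in auto)
    finally have le: "cover_time M X (T \<union> {v}) + cover_time M X S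
        \<le> cover_time M X (S \<union> {v}) + cover_time M X T" .
    have f: "cover_time M X (T \<union> {v}) < top" "cover_time M X S < top"
        "cover_time M X (S \<union> {v}) < top" "cover_time M X T < top"
      using fin SV h by auto
    have "enn2real (cover_time M X (T \<union> {v}) + cover_time M X S)
        \<le> enn2real (cover_time M X (S \<union> {v}) + cover_time M X T)"
      by (rule enn2real_mono[OF le]) (use f in simp)
    then show ?thesis using f by (simp add: enn2real_add')
  qed
  show ?thesis using mono sub by blast
qed

end
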